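(* Let $G=(V,E)$ be a finite, connected, simple, undirected graph with no isolated vertices, let $\alpha\in(0,1)$, and let $S\subset V$ be nonempty with $\mathrm{vol}(S)\le\mathrm{vol}(V)/2$. Then $$h_{S,\alpha}\ \le\ \frac{1-\alpha}{\alpha}\,\frac{d_{\mathrm{avg}}(S)}{d_{\min}(S)}\,h_S.$$
   Context: $A$ is the adjacency matrix and $D$ the diagonal degree matrix. The personalized PageRank diffusion matrix is $R_\alpha=\sum_{k=0}^\infty\alpha(1-\alpha)^k(D^{-1}A)^k$. $\mathrm{vol}(S)=\sum_{v\in S}d_v$; $\partial S$ is the set of edges with exactly one endpoint in $S$; $h_S=|\partial S|/\mathrm{vol}(S)$; $h_{S,\alpha}=\frac{1}{|S|}\sum_{i\in S,\ j\in V\setminus S}(R_\alpha)_{ij}$; $d_{\mathrm{avg}}(S)=\mathrm{vol}(S)/|S|$ and $d_{\min}(S)=\min_{v\in S}d_v$. *)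

theory Defs
  imports "HOL-Analysis.Analysis"
begin

definition simple_graph :: "'a set \<Rightarrow> ('a \<Rightarrow> 'a \<Rightarrow> bool) \<Rightarrow> bool" where
  "simple_graph V E \<longleftrightarrow> finite V \<and> (\<forall>u v. E u v \<longrightarrow> u \<in> V \<and> v \<in> V)
     \<and> (\<forall>u v. E u v \<longrightarrow> E v u) \<and> (\<forall>v. \<not> E v v)"

definition connected_graph :: "'a set \<Rightarrow> ('a \<Rightarrow> 'a \<Rightarrow> bool) \<Rightarrow> bool" where
  "connected_graph V E \<longleftrightarrow> (\<forall>u\<in>V. \<forall>v\<in>V. E\<^sup>*\<^sup>* u v)"

definition degree :: "'a set \<Rightarrow> ('a \<Rightarrow> 'a \<Rightarrow> bool) \<Rightarrow> 'a \<Rightarrow> nat" where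
  "degree V E v = card {u\<in>V. E v u}"

definition vol :: "'a set \<Rightarrow> ('a \<Rightarrow> 'a \<Rightarrow> bool) \<Rightarrow> 'a set \<Rightarrow> real" where
  "vol V E S = (\<Sum>v\<in>S. real (degree V E v))"

definition boundary :: "'a set \<Rightarrow> ('a \<Rightarrow> 'a \<Rightarrow> bool) \<Rightarrow> 'a set \<Rightarrow> 'a set set" where
  "boundary V E S = {{u, v} | u v. E u v \<and> u \<in> S \<and> v \<in> V - S}"

definition conductance :: "'a set \<Rightarrow> ('a \<Rightarrow> 'a \<Rightarrow> bool) \<Rightarrow> 'a set \<Rightarrow> real" where
  "conductance V E S = real (card (boundary V E S)) / vol V E S"

definition walk_matrix :: "'a set \<Rightarrow> ('a \<Rightarrow> 'a \<Rightarrow> bool) \<Rightarrow> 'a \<Rightarrow> 'a \<Rightarrow> real" where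
  "walk_matrix V E i j = (if E i j then 1 / real (degree V E i) else 0)"

fun walk_power :: "'a set \<Rightarrow> ('a \<Rightarrow> 'a \<Rightarrow> bool) \<Rightarrow> nat \<Rightarrow> 'a \<Rightarrow> 'a \<Rightarrow> real" where
  "walk_power V E 0 i j = (if i = j then 1 else 0)"
| "walk_power V E (Suc k) i j = (\<Sum>l\<in>V. walk_power V E k i l * walk_matrix V E l j)"

definition ppr_matrix :: "'a set \<Rightarrow> ('a \<Rightarrow> 'a \<Rightarrow> bool) \<Rightarrow> real \<Rightarrow> 'a \<Rightarrow> 'a \<Rightarrow> real" where
  "ppr_matrix V E \<alpha> i j = (\<Sum>k. \<alpha> * (1 - \<alpha>) ^ k * walk_power V E k i j)"

definition ppr_conductance :: "'a set \<Rightarrow> ('a \<Rightarrow> 'a \<Rightarrow> bool) \<Rightarrow> real \<Rightarrow> 'a set \<Rightarrow> real" where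
  "ppr_conductance V E \<alpha> S =
     (1 / real (card S)) * (\<Sum>i\<in>S. \<Sum>j\<in>V - S. ppr_matrix V E \<alpha> i j)"

definition avg_degree :: "'a set \<Rightarrow> ('a \<Rightarrow> 'a \<Rightarrow> bool) \<Rightarrow> 'a set \<Rightarrow> real" where
  "avg_degree V E S = vol V E S / real (card S)"

definition min_degree :: "'a set \<Rightarrow> ('a \<Rightarrow> 'a \<Rightarrow> bool) \<Rightarrow> 'a set \<Rightarrow> real" where
  "min_degree V E S = real (Min (degree V E ` S))"

end

theory Submission
  imports Defs
begin

locale GG =
  fixes V :: "'a set" and E :: "'a \<Rightarrow> 'a \<Rightarrow> bool"
  assumes sg: "simple_graph V E" and pos: "\<forall>v\<in>V. degree V E v > 0"
begin

lemma finV: "finite V" using sg by (simp add: simple_graph_def)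
lemma EV: "E u v \<Longrightarrow> u \<in> V \<and> v \<in> V" using sg by (simp add: simple_graph_def)
lemma Esym: "E u v \<Longrightarrow> E v u" using sg by (simp add: simple_graph_def)

lemma M_nonneg: "walk_matrix V E l j \<ge> 0"
  by (simp add: walk_matrix_def)

lemma W_nonneg: "walk_power V E k i j \<ge> 0"
  by (induction k arbitrary: j) (auto intro!: sum_nonneg mult_nonneg_nonneg M_nonneg)

lemma rowM_gen: "(\<Sum>j\<in>A. walk_matrix V E l j) = real (card {j\<in>A. E l j}) / real (degree V E l)"
  if "finite A" for A
proof -
  have "(\<Sum>j\<in>A. walk_matrix V E l j) = (\<Sum>j\<in>{j\<in>A. E l j}. 1 / real (degree V E l))"
    unfolding walk_matrix_def using sum.inter_filter[OF that, of "\<lambda>_. 1 / real (degree V E l)" "E l"] by simp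
  thus ?thesis by simp
qed

lemma rowM: "l \<in> V \<Longrightarrow> (\<Sum>j\<in>V. walk_matrix V E l j) = 1"
  using rowM_gen[OF finV, of l] pos by (simp add: degree_def)

lemma row: "i \<in> V \<Longrightarrow> (\<Sum>j\<in>V. walk_power V E k i j) = 1"
proof (induction k)
  case 0
  then show ?case using finV by simp
next
  case (Suc k)
  have "(\<Sum>j\<in>V. walk_power V E (Suc k) i j)
      = (\<Sum>l\<in>V. walk_power V E k i l * (\<Sum>j\<in>V. walk_matrix V E l j))"
    by (simp add: sum_distrib_left) (rule sum.swap)
  also have "\<dots> = (\<Sum>l\<in>V. walk_power V E k i l)" using rowM by simp
  finally show ?case using Suc by simp
qed

lemma W_le1: "i \<in> V \<Longrightarrow> j \<in> V \<Longrightarrow> walk_power V E k i j \<le> 1"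
  using member_le_sum[of j V "walk_power V E k i"] row[of i k] finV W_nonneg by auto

lemma stationary: "u \<in> V \<Longrightarrow> (\<Sum>i\<in>V. real (degree V E i) * walk_power V E k i u) = real (degree V E u)"
proof (induction k arbitrary: u)
  case 0
  then show ?case using finV by (simp add: if_distrib cong: if_cong)
next
  case (Suc k)
  have "(\<Sum>i\<in>V. real (degree V E i) * walk_power V E (Suc k) i u)
      = (\<Sum>l\<in>V. (\<Sum>i\<in>V. real (degree V E i) * walk_power V E k i l) * walk_matrix V E l u)"
    by (simp add: sum_distrib_left sum_distrib_right mult.assoc) (rule sum.swap)
  also have "\<dots> = (\<Sum>l\<in>V. real (degree V E l) * walk_matrix V E l u)" using Suc by simp
  also have "\<dots> = (\<Sum>l\<in>V. if E l u then 1 else 0)"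
    using pos by (intro sum.cong) (auto simp: walk_matrix_def)
  also have "\<dots> = real (card {l\<in>V. E l u})"
    using sum.inter_filter[OF finV, of "\<lambda>_. 1::real" "\<lambda>l. E l u"] by simp
  also have "{l\<in>V. E l u} = {l\<in>V. E u l}" using Esym by blast
  finally show ?case by (simp add: degree_def)
qed

lemma colS:
  assumes "u \<in> V" "S \<subseteq> V" "dm > 0" "\<forall>i\<in>S. dm \<le> real (degree V E i)"
  shows "(\<Sum>i\<in>S. walk_power V E k i u) \<le> real (degree V E u) / dm"
proof -
  have "(\<Sum>i\<in>S. walk_power V E k i u) \<le> (\<Sum>i\<in>S. real (degree V E i) * walk_power V E k i u / dm)"
  proof (rule sum_mono)
    fix i assume "i \<in> S"
    hence "dm * walk_power V E k i u \<le> real (degree V E i) * walk_power V E k i u"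
      using assms W_nonneg by (intro mult_right_mono) auto
    thus "walk_power V E k i u \<le> real (degree V E i) * walk_power V E k i u / dm"
      using assms by (simp add: field_simps)
  qed
  also have "\<dots> \<le> (\<Sum>i\<in>V. real (degree V E i) * walk_power V E k i u / dm)"
    using assms finV W_nonneg by (intro sum_mono2) auto
  also have "\<dots> = real (degree V E u) / dm"
    using stationary[OF assms(1)] by (simp add: sum_divide_distrib[symmetric])
  finally show ?thesis .
qed

lemma boundary_card:
  assumes "S \<subseteq> V"
  shows "(\<Sum>l\<in>S. real (card {j\<in>V-S. E l j})) = real (card (boundary V E S))"
proof -
  have fS: "finite S" using assms finV finite_subset by blast
  have "(\<Sum>l\<in>S. card {j\<in>V-S. E l j}) = card (SIGMA l:S. {j\<in>V-S. E l j})"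
    using fS finV by (subst card_SigmaI) auto
  also have "\<dots> = card ((\<lambda>(u,v). {u,v}) ` (SIGMA l:S. {j\<in>V-S. E l j}))"
    by (rule card_image[symmetric]) (auto simp: inj_on_def doubleton_eq_iff)
  also have "(\<lambda>(u,v). {u,v}) ` (SIGMA l:S. {j\<in>V-S. E l j}) = boundary V E S"
    unfolding boundary_def by auto
  finally have "(\<Sum>l\<in>S. card {j\<in>V-S. E l j}) = card (boundary V E S)" .
  from arg_cong[OF this, of real] show ?thesis by simp
qed

lemma step:
  assumes "S \<subseteq> V" "dm > 0" "\<forall>i\<in>S. dm \<le> real (degree V E i)"
  shows "(\<Sum>i\<in>S. \<Sum>j\<in>V-S. walk_power V E (Suc k) i j)
     \<le> (\<Sum>i\<in>S. \<Sum>j\<in>V-S. walk_power V E k i j) + real (card (boundary V E S)) / dm"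
proof -
  define h where "h l = (\<Sum>j\<in>V-S. walk_matrix V E l j)" for l
  define W where "W i l = walk_power V E k i l" for i l
  have fS: "finite S" using assms finV finite_subset by blast
  have h_le: "h l \<le> 1" if "l \<in> V" for l
  proof -
    have "h l \<le> (\<Sum>j\<in>V. walk_matrix V E l j)" unfolding h_def
      using finV M_nonneg by (intro sum_mono2) auto
    thus ?thesis using rowM[OF that] by simp
  qed
  have A: "(\<Sum>j\<in>V-S. walk_power V E (Suc k) i j) = (\<Sum>l\<in>V. W i l * h l)" for i
    unfolding h_def W_def by (simp add: sum_distrib_left) (rule sum.swap)
  have B: "(\<Sum>j\<in>V-S. walk_power V E k i j) = (\<Sum>l\<in>V. W i l * (if l \<in> S then 0 else 1))" for i
  proof -
    have "(\<Sum>j\<in>V-S. walk_power V E k i j) = (\<Sum>l\<in>V. if l \<in> S then 0 else W i l)"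
      unfolding W_def using finV by (simp add: sum.If_cases Diff_eq)
    also have "\<dots> = (\<Sum>l\<in>V. W i l * (if l \<in> S then 0 else 1))"
      by (rule sum.cong) auto
    finally show ?thesis .
  qed
  have C: "(\<Sum>l\<in>V. W i l * h l) \<le> (\<Sum>l\<in>V. W i l * (if l \<in> S then 0 else 1)) + (\<Sum>l\<in>S. W i l * h l)" for i
  proof -
    have "(\<Sum>l\<in>V. W i l * h l) \<le> (\<Sum>l\<in>V. W i l * (if l \<in> S then 0 else 1) + (if l \<in> S then W i l * h l else 0))"
    proof (rule sum_mono)
      fix l assume "l \<in> V"
      thus "W i l * h l \<le> W i l * (if l \<in> S then 0 else 1) + (if l \<in> S then W i l * h l else 0)"
        using h_le[of l] W_nonneg[of k i l] unfolding W_def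
        by (cases "l \<in> S") (simp_all add: mult_left_le)
    qed
    also have "\<dots> = (\<Sum>l\<in>V. W i l * (if l \<in> S then 0 else 1)) + (\<Sum>l\<in>S. W i l * h l)"
      using finV assms(1) by (simp add: sum.distrib sum.inter_restrict[symmetric] Int_absorb1)
    finally show ?thesis .
  qed
  have "(\<Sum>i\<in>S. \<Sum>j\<in>V-S. walk_power V E (Suc k) i j)
     \<le> (\<Sum>i\<in>S. \<Sum>j\<in>V-S. walk_power V E k i j) + (\<Sum>i\<in>S. \<Sum>l\<in>S. W i l * h l)"
    unfolding A B sum.distrib[symmetric] by (rule sum_mono) (rule C)
  also have "(\<Sum>i\<in>S. \<Sum>l\<in>S. W i l * h l) = (\<Sum>l\<in>S. h l * (\<Sum>i\<in>S. W i l))"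
    by (subst sum.swap) (simp add: sum_distrib_left mult.commute)
  also have "\<dots> \<le> (\<Sum>l\<in>S. h l * (real (degree V E l) / dm))"
  proof (rule sum_mono)
    fix l assume "l \<in> S"
    have "h l \<ge> 0" unfolding h_def by (intro sum_nonneg M_nonneg)
    have lV: "l \<in> V" using \<open>l \<in> S\<close> assms(1) by auto
    show "h l * (\<Sum>i\<in>S. W i l) \<le> h l * (real (degree V E l) / dm)"
      unfolding W_def by (rule mult_left_mono[OF colS[OF lV assms] \<open>0 \<le> h l\<close>])
  qed
  also have "\<dots> = (\<Sum>l\<in>S. real (card {j\<in>V-S. E l j})) / dm"
  proof -
    have hl: "h l * (real (degree V E l) / dm) = real (card {j\<in>V-S. E l j}) / dm" if "l \<in> S" for l
    proof -
      have "real (degree V E l) > 0" using pos that assms(1) by auto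
      thus ?thesis using rowM_gen[of "V-S" l] finV unfolding h_def by (simp add: field_simps)
    qed
    show ?thesis unfolding sum_divide_distrib by (rule sum.cong[OF refl]) (rule hl)
  qed
  also have "\<dots> = real (card (boundary V E S)) / dm" using boundary_card assms by simp
  finally show ?thesis by simp
qed

lemma gbound:
  assumes "S \<subseteq> V" "dm > 0" "\<forall>i\<in>S. dm \<le> real (degree V E i)"
  shows "(\<Sum>i\<in>S. \<Sum>j\<in>V-S. walk_power V E k i j) \<le> real k * (real (card (boundary V E S)) / dm)"
proof (induction k)
  case 0
  have "(\<Sum>i\<in>S. \<Sum>j\<in>V-S. walk_power V E 0 i j) = 0"
    by (intro sum.neutral ballI) auto
  then show ?case by simp
next
  case (Suc k)
  have "real (Suc k) * (real (card (boundary V E S)) / dm) = real k * (real (card (boundary V E S)) / dm) + real (card (boundary V E S)) / dm"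
    by (simp only: of_nat_Suc distrib_right mult_1_left add.commute)
  then show ?case using step[OF assms, of k] Suc.IH by linarith
qed

end

lemma kx_sums:
  fixes x :: real assumes "0 \<le> x" "x < 1"
  shows "(\<lambda>n. real n * x ^ n) sums (x / (1 - x)^2)"
proof -
  have "(\<lambda>n. x * (real (Suc n) * x ^ n)) sums (x * (1 / (1 - x)^2))"
    using geometric_deriv_sums[of x] assms by (intro sums_mult) auto
  hence "(\<lambda>n. real (Suc n) * x ^ Suc n) sums (x / (1 - x)^2)"
    by (simp add: algebra_simps)
  thus ?thesis using sums_Suc_iff[of "\<lambda>n. real n * x ^ n"] by simp
qed

theorem theorem6:
  fixes V :: "'a set" and E :: "'a \<Rightarrow> 'a \<Rightarrow> bool" and \<alpha> :: real and S :: "'a set"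
  assumes "simple_graph V E"
    and "connected_graph V E"
    and "\<forall>v\<in>V. degree V E v > 0"
    and "0 < \<alpha>" and "\<alpha> < 1"
    and "S \<subset> V" and "S \<noteq> {}"
    and "vol V E S \<le> vol V E V / 2"
  shows "ppr_conductance V E \<alpha> S
           \<le> (1 - \<alpha>) / \<alpha> * (avg_degree V E S / min_degree V E S) * conductance V E S"
proof -
  interpret GG V E using assms(1,3) by unfold_locales
  have SV: "S \<subseteq> V" using assms(6) by auto
  have fS: "finite S" using SV finV finite_subset by blast
  define dm where "dm = min_degree V E S"
  have dmle: "\<forall>i\<in>S. dm \<le> real (degree V E i)"
    unfolding dm_def min_degree_def using fS by auto
  have dmpos: "dm > 0"
  proof -
    have "Min (degree V E ` S) \<in> degree V E ` S" using fS assms(7) by (intro Min_in) auto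
    then obtain v where "v \<in> S" "Min (degree V E ` S) = degree V E v" by auto
    thus ?thesis unfolding dm_def min_degree_def using pos SV by auto
  qed
  define b where "b = real (card (boundary V E S))"
  define x where "x = 1 - \<alpha>"
  have x0: "0 \<le> x" "x < 1" using assms(4,5) unfolding x_def by auto
  define g where "g k = (\<Sum>i\<in>S. \<Sum>j\<in>V-S. walk_power V E k i j)" for k
  have summ: "summable (\<lambda>k. \<alpha> * x ^ k * walk_power V E k i j)" if "i \<in> S" "j \<in> V - S" for i j
  proof (rule summable_comparison_test[of _ "\<lambda>k. \<alpha> * x ^ k"])
    show "\<exists>N. \<forall>n\<ge>N. norm (\<alpha> * x ^ n * walk_power V E n i j) \<le> \<alpha> * x ^ n"
    proof (intro exI[of _ 0] allI impI)
      fix n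
      have w: "walk_power V E n i j \<le> 1" "0 \<le> walk_power V E n i j"
        using W_nonneg W_le1[of i j] that SV by auto
      have a: "0 \<le> \<alpha> * x ^ n" using x0 assms(4) by simp
      have "norm (\<alpha> * x ^ n * walk_power V E n i j) = \<alpha> * x ^ n * walk_power V E n i j"
        using a w by simp
      also have "\<dots> \<le> \<alpha> * x ^ n" using mult_left_le[OF w(1) a] .
      finally show "norm (\<alpha> * x ^ n * walk_power V E n i j) \<le> \<alpha> * x ^ n" .
    qed
    show "summable (\<lambda>k. \<alpha> * x ^ k)" using x0 by (intro summable_mult summable_geometric) auto
  qed
  have eq: "(\<Sum>i\<in>S. \<Sum>j\<in>V-S. ppr_matrix V E \<alpha> i j) = (\<Sum>k. \<alpha> * x ^ k * g k)"
  proof -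
    have "(\<Sum>i\<in>S. \<Sum>j\<in>V-S. ppr_matrix V E \<alpha> i j) = (\<Sum>i\<in>S. \<Sum>k. \<Sum>j\<in>V-S. \<alpha> * x ^ k * walk_power V E k i j)"
      unfolding ppr_matrix_def x_def[symmetric]
      by (intro sum.cong refl suminf_sum[symmetric]) (auto intro: summ)
    also have "\<dots> = (\<Sum>k. \<Sum>i\<in>S. \<Sum>j\<in>V-S. \<alpha> * x ^ k * walk_power V E k i j)"
      by (intro suminf_sum[symmetric] summable_sum) (auto intro: summ)
    also have "\<dots> = (\<Sum>k. \<alpha> * x ^ k * g k)"
      unfolding g_def by (simp add: sum_distrib_left)
    finally show ?thesis .
  qed
  have sm2: "(\<lambda>k. \<alpha> * (b / dm) * (real k * x ^ k)) sums (\<alpha> * (b / dm) * (x / (1 - x)^2))"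
    using kx_sums[OF x0] by (intro sums_mult)
  have sm1: "summable (\<lambda>k. \<alpha> * x ^ k * g k)"
    unfolding g_def by (simp add: sum_distrib_left) (intro summable_sum; auto intro: summ)
  have "(\<Sum>k. \<alpha> * x ^ k * g k) \<le> (\<Sum>k. \<alpha> * (b / dm) * (real k * x ^ k))"
  proof (rule suminf_le[OF _ sm1 sums_summable[OF sm2]])
    fix k
    have "g k \<le> real k * (b / dm)" unfolding g_def b_def using gbound[OF SV dmpos dmle] .
    hence "\<alpha> * x ^ k * g k \<le> \<alpha> * x ^ k * (real k * (b / dm))"
      using assms(4) x0 by (intro mult_left_mono) auto
    thus "\<alpha> * x ^ k * g k \<le> \<alpha> * (b / dm) * (real k * x ^ k)" by (simp add: algebra_simps)
  qed
  also have "\<dots> = \<alpha> * (b / dm) * (x / (1 - x)^2)" using sums_unique[OF sm2] by simp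
  also have "\<dots> = (1 - \<alpha>) / \<alpha> * b / dm"
    using assms(4) dmpos unfolding x_def by (simp add: power2_eq_square field_simps)
  finally have main: "(\<Sum>i\<in>S. \<Sum>j\<in>V-S. ppr_matrix V E \<alpha> i j) \<le> (1 - \<alpha>) / \<alpha> * b / dm"
    using eq by simp
  have volpos: "vol V E S > 0"
  proof -
    obtain v where "v \<in> S" using assms(7) by auto
    hence "real (degree V E v) \<le> vol V E S" unfolding vol_def
      using fS by (intro member_le_sum) auto
    moreover have "degree V E v > 0" using pos SV \<open>v \<in> S\<close> by auto
    ultimately show ?thesis by linarith
  qed
  have cS: "real (card S) > 0" using fS assms(7) by (simp add: card_gt_0_iff)
  have "(1 - \<alpha>) / \<alpha> * (avg_degree V E S / min_degree V E S) * conductance V E S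
      = (1 / real (card S)) * ((1 - \<alpha>) / \<alpha> * b / dm)"
    unfolding avg_degree_def conductance_def dm_def[symmetric] b_def[symmetric]
    using volpos cS dmpos assms(4) by (simp add: field_simps)
  moreover have "ppr_conductance V E \<alpha> S = (1 / real (card S)) * (\<Sum>i\<in>S. \<Sum>j\<in>V-S. ppr_matrix V E \<alpha> i j)"
    unfolding ppr_conductance_def ..
  moreover have "(1 / real (card S)) * (\<Sum>i\<in>S. \<Sum>j\<in>V-S. ppr_matrix V E \<alpha> i j)
      \<le> (1 / real (card S)) * ((1 - \<alpha>) / \<alpha> * b / dm)"
    using main cS by (intro mult_left_mono) auto
  ultimately show ?thesis by simp
qed

end
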